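(* For integers $k$ and $t$ with $k \geq 2$ and $0 \leq t \leq k$, $$gr_k(K_3 : tP_5, (k-t)P_3) \leq t+4,$$ i.e., for every $n \geq t+4$, every coloring of the edges of $K_n$ with colors from $\{1,\dots,k\}$ contains either a rainbow triangle, or a monochromatic path $P_5$ in some color $j \in \{1,\dots,t\}$, or a monochromatic path $P_3$ in some color $j \in \{t+1,\dots,k\}$.
   Context: $P_m$ denotes the path on $m$ vertices. A rainbow triangle is a triangle whose three edges have three distinct colors. For graphs $G, H_1,\dots,H_k$, $gr_k(G : H_1,\dots,H_k)$ is the minimum integer $N$ such that for every $n \geq N$, every coloring of the edges of $K_n$ using colors $1,\dots,k$ contains either a rainbow copy of $G$ or, for some $i$, a copy of $H_i$ all of whose edges have color $i$. The notation $gr_k(G : tH, (k-t)K)$ means $gr_k(G : H,\dots,H,K,\dots,K)$ with $H$ appearing $t$ times (colors $1,\dots,t$) and $K$ appearing $k-t$ times (colors $t+1,\dots,k$). *)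

theory Defs
  imports Main
begin

definition edge_coloring :: "nat \<Rightarrow> nat \<Rightarrow> (nat set \<Rightarrow> nat) \<Rightarrow> bool" where
  "edge_coloring n k c \<longleftrightarrow>
     (\<forall>u<n. \<forall>v<n. u \<noteq> v \<longrightarrow> c {u, v} \<in> {1..k})"

definition has_rainbow_triangle :: "nat \<Rightarrow> (nat set \<Rightarrow> nat) \<Rightarrow> bool" where
  "has_rainbow_triangle n c \<longleftrightarrow>
     (\<exists>a b d. a < n \<and> b < n \<and> d < n \<and> a \<noteq> b \<and> b \<noteq> d \<and> a \<noteq> d \<and>
        c {a, b} \<noteq> c {b, d} \<and> c {a, b} \<noteq> c {a, d} \<and> c {b, d} \<noteq> c {a, d})"

definition has_mono_path :: "nat \<Rightarrow> (nat set \<Rightarrow> nat) \<Rightarrow> nat \<Rightarrow> nat \<Rightarrow> bool" where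
  "has_mono_path n c m j \<longleftrightarrow>
     (\<exists>vs. length vs = m \<and> distinct vs \<and> set vs \<subseteq> {..<n} \<and>
        (\<forall>i. Suc i < m \<longrightarrow> c {vs ! i, vs ! Suc i} = j))"

end

theory Submission
  imports Defs
begin


definition gal :: "nat set \<Rightarrow> (nat set \<Rightarrow> nat) \<Rightarrow> bool" where
 "gal V c \<longleftrightarrow> (\<forall>a\<in>V. \<forall>b\<in>V. \<forall>d\<in>V. a \<noteq> b \<longrightarrow> b \<noteq> d \<longrightarrow> a \<noteq> d \<longrightarrow>
     c {a,b} = c {b,d} \<or> c {a,b} = c {a,d} \<or> c {b,d} = c {a,d})"

definition p5f :: "nat set \<Rightarrow> (nat set \<Rightarrow> nat) \<Rightarrow> bool" where
 "p5f V c \<longleftrightarrow> \<not>(\<exists>a b d e f. a\<in>V \<and> b\<in>V \<and> d\<in>V \<and> e\<in>V \<and> f\<in>V \<and> distinct [a,b,d,e,f] \<and>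
     c{a,b} = c{b,d} \<and> c{b,d} = c{d,e} \<and> c{d,e} = c{e,f})"

definition p3 :: "nat set \<Rightarrow> (nat set \<Rightarrow> nat) \<Rightarrow> nat \<Rightarrow> bool" where
 "p3 V c j \<longleftrightarrow> (\<exists>a b d. a\<in>V \<and> b\<in>V \<and> d\<in>V \<and> a\<noteq>b \<and> b\<noteq>d \<and> a\<noteq>d \<and> c{a,b} = j \<and> c{b,d} = j)"

definition Bs :: "nat set \<Rightarrow> (nat set \<Rightarrow> nat) \<Rightarrow> nat set" where "Bs V c = {j. p3 V c j}"

definition adj :: "nat set \<Rightarrow> (nat set \<Rightarrow> nat) \<Rightarrow> nat \<Rightarrow> nat \<Rightarrow> nat \<Rightarrow> bool" where
 "adj V c j y z \<longleftrightarrow> y\<in>V \<and> z\<in>V \<and> y\<noteq>z \<and> c{y,z} = j"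

definition comp :: "nat set \<Rightarrow> (nat set \<Rightarrow> nat) \<Rightarrow> nat \<Rightarrow> nat \<Rightarrow> nat set" where
 "comp V c j b = {z. (adj V c j)\<^sup>*\<^sup>* b z}"

definition nb :: "nat set \<Rightarrow> (nat set \<Rightarrow> nat) \<Rightarrow> nat \<Rightarrow> nat \<Rightarrow> nat set" where
 "nb V c j y = {z\<in>V. z\<noteq>y \<and> c{y,z} = j}"

lemma P5E: "p5f V c \<Longrightarrow> a\<in>V \<Longrightarrow> b\<in>V \<Longrightarrow> d\<in>V \<Longrightarrow> e\<in>V \<Longrightarrow> f\<in>V \<Longrightarrow> distinct [a,b,d,e,f] \<Longrightarrow>
   c{a,b} = j \<Longrightarrow> c{b,d} = j \<Longrightarrow> c{d,e} = j \<Longrightarrow> c{e,f} = j \<Longrightarrow> False"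
  apply (simp only: p5f_def)
  apply (erule notE)
  apply (rule exI[of _ a], rule exI[of _ b], rule exI[of _ d], rule exI[of _ e], rule exI[of _ f])
  apply simp
  done

lemma galR: "gal V c \<Longrightarrow> x\<in>V \<Longrightarrow> y\<in>V \<Longrightarrow> z\<in>V \<Longrightarrow> x\<noteq>y \<Longrightarrow> y\<noteq>z \<Longrightarrow> x\<noteq>z \<Longrightarrow>
   c{y,z} = j \<Longrightarrow> c{x,y} \<noteq> j \<Longrightarrow> c{x,z} \<noteq> j \<Longrightarrow> c{x,y} = c{x,z}"
proof -
  assume g: "gal V c" and h: "x\<in>V" "y\<in>V" "z\<in>V" "x\<noteq>y" "y\<noteq>z" "x\<noteq>z"
     "c{y,z} = j" "c{x,y} \<noteq> j" "c{x,z} \<noteq> j"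
  have "c{x,y} = c{y,z} \<or> c{x,y} = c{x,z} \<or> c{y,z} = c{x,z}"
    using g h(1-6) unfolding gal_def by blast
  then show ?thesis using h(7-9) by auto
qed

lemma comp_sub: "b\<in>V \<Longrightarrow> comp V c j b \<subseteq> V"
proof
  fix z assume b: "b\<in>V" and "z \<in> comp V c j b"
  then have "(adj V c j)\<^sup>*\<^sup>* b z" by (simp add: comp_def)
  then show "z \<in> V" by induction (use b in \<open>auto simp: adj_def\<close>)
qed

lemma comp_self: "b \<in> comp V c j b" by (simp add: comp_def)

lemma comp_step: "z \<in> comp V c j b \<Longrightarrow> adj V c j z w \<Longrightarrow> w \<in> comp V c j b"
  unfolding comp_def by (auto intro: rtranclp.rtrancl_into_rtrancl)

lemma comp_module:
  assumes g: "gal V c" and bV: "b\<in>V" and xV: "x\<in>V" and xn: "x \<notin> comp V c j b"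
    and z: "z \<in> comp V c j b"
  shows "c{x,z} = c{x,b} \<and> c{x,z} \<noteq> j"
proof -
  have nj: "c{x,w} \<noteq> j" if "w \<in> comp V c j b" for w
  proof
    assume "c{x,w} = j"
    have "w \<in> V" using comp_sub[OF bV] that by auto
    moreover have "w \<noteq> x" using that xn by auto
    moreover have "c{w,x} = j" using \<open>c{x,w} = j\<close> by (simp add: insert_commute)
    ultimately have "adj V c j w x" using xV by (auto simp: adj_def)
    then show False using comp_step[OF that] xn by auto
  qed
  from z have "(adj V c j)\<^sup>*\<^sup>* b z" by (simp add: comp_def)
  then have "c{x,z} = c{x,b}"
  proof induction
    case base then show ?case by simp
  next
    case (step y w)
    have yc: "y \<in> comp V c j b" using step(1) by (simp add: comp_def)
    have wc: "w \<in> comp V c j b" using comp_step[OF yc step(2)] .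
    have "c{x,y} = c{x,w}"
      apply (rule galR[OF g xV, of y w j])
      using step(2) yc wc xn nj[OF yc] nj[OF wc] by (auto simp: adj_def)
    then show ?case using step(3) by simp
  qed
  then show ?thesis using nj[OF z] by simp
qed

lemma comp_conn:
  assumes cn: "comp V c j b = V" and S: "S \<subseteq> V" "b \<in> S" "S \<noteq> V"
  shows "\<exists>w\<in>V-S. \<exists>s\<in>S. c{s,w} = j"
proof (rule ccontr)
  assume h: "\<not> ?thesis"
  have "z \<in> S" if "z \<in> comp V c j b" for z
  proof -
    from that have "(adj V c j)\<^sup>*\<^sup>* b z" by (simp add: comp_def)
    then show ?thesis
      by induction (use S h in \<open>auto simp: adj_def\<close>)
  qed
  then show False using cn S by auto
qed

lemma two_el: "finite A \<Longrightarrow> card A \<ge> 2 \<Longrightarrow> x \<in> A \<Longrightarrow> \<exists>y\<in>A. y \<noteq> x"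
proof -
  assume "finite A" "card A \<ge> 2" "x\<in>A"
  then have "card (A - {x}) \<ge> 1" by (simp add: card_Diff_singleton)
  then have "A - {x} \<noteq> {}" by (metis card.empty not_one_le_zero)
  then obtain y where "y \<in> A - {x}" by blast
  then show ?thesis by blast
qed

lemma one_el: "finite A \<Longrightarrow> card A \<ge> 1 \<Longrightarrow> \<exists>y. y\<in>A"
  by (metis card.empty ex_in_conv not_one_le_zero)



lemma C4:
  assumes p: "p5f V c" and cn: "comp V c j b = V" and c5: "card V \<ge> 5" and fin: "finite V"
    and V: "b\<in>V" "p\<in>V" "q\<in>V" "r\<in>V" and ds: "distinct [b,p,q,r]"
    and e: "c{b,p} = j" "c{p,q} = j" "c{q,r} = j" "c{r,b} = j"
  shows False
proof -
  have "card {b,p,q,r} \<le> 4" by (rule order_trans[OF card_insert_le_m1]) (auto simp: card_insert_le_m1 intro: order_trans[OF card_insert_le_m1])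
  then have "{b,p,q,r} \<noteq> V" using c5 by auto
  then obtain w s where w: "w \<in> V - {b,p,q,r}" and s: "s \<in> {b,p,q,r}" and sw: "c{s,w} = j"
    using comp_conn[OF cn, of "{b,p,q,r}"] V by blast
  have sw': "c{w,s} = j" using sw by (simp add: insert_commute)
  from s have "s=b \<or> s=p \<or> s=q \<or> s=r" by auto
  then show False
  proof (elim disjE)
    assume "s = b" then show False
      using P5E[OF p, of w b p q r j] w V ds e sw' by auto
  next
    assume "s = p" then show False
      using P5E[OF p, of w p q r b j] w V ds e sw' by auto
  next
    assume "s = q" then show False
      using P5E[OF p, of w q r b p j] w V ds e sw' by (auto simp: insert_commute)
  next
    assume "s = r" then show False
      using P5E[OF p, of w r b p q j] w V ds e sw' by (auto simp: insert_commute)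
  qed
qed

lemma config:
  assumes g: "gal V c" and p: "p5f V c"
    and V: "u\<in>V" "v\<in>V" "x1\<in>V" "x2\<in>V" "y1\<in>V" "y2\<in>V"
    and ds: "distinct [u,v,x1,x2,y1,y2]"
    and e: "c{u,v} = j" "c{u,x1} = j" "c{u,x2} = j" "c{v,y1} = j" "c{v,y2} = j"
  shows False
proof -
  have e': "c{v,u} = j" "c{x1,u} = j" "c{x2,u} = j" "c{y1,v} = j" "c{y2,v} = j"
    using e by (simp_all add: insert_commute)
  have n1: "c{x1,y1} \<noteq> j" using P5E[OF p, of x2 u x1 y1 v j] V ds e e' by auto
  have n2: "c{x1,y2} \<noteq> j" using P5E[OF p, of x2 u x1 y2 v j] V ds e e' by auto
  have n3: "c{u,y1} \<noteq> j" using P5E[OF p, of x1 u y1 v y2 j] V ds e e' by auto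
  have n4: "c{u,y2} \<noteq> j" using P5E[OF p, of x1 u y2 v y1 j] V ds e e' by auto
  have n5: "c{x1,v} \<noteq> j" using P5E[OF p, of y1 v x1 u x2 j] V ds e e' by (auto simp: insert_commute)
  have c1: "{y1,u} = {u,y1}" "{y1,x1} = {x1,y1}" "{y2,u} = {u,y2}" "{y2,x1} = {x1,y2}"
    by (simp_all add: insert_commute)
  have e1: "c{y1,u} = c{y1,x1}" by (rule galR[OF g, of y1 u x1 j]) (use V ds e n1 n3 c1 in auto)
  have e2: "c{x1,v} = c{x1,y1}" by (rule galR[OF g, of x1 v y1 j]) (use V ds e n1 n5 in auto)
  have e3: "c{x1,v} = c{x1,y2}" by (rule galR[OF g, of x1 v y2 j]) (use V ds e n2 n5 in auto)
  have e4: "c{y2,u} = c{y2,x1}" by (rule galR[OF g, of y2 u x1 j]) (use V ds e n2 n4 c1 in auto)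
  show False
    apply (rule P5E[OF p, of y1 u y2 x1 v "c{y1,u}"])
    using V ds e1 e2 e3 e4 c1 by auto
qed

lemma crossX:
  assumes g: "gal V c" and p: "p5f V c"
    and V: "b\<in>V" "x1\<in>V" "p\<in>V" "q\<in>V" "r\<in>V"
    and ds: "distinct [b,x1,p,q,r]"
    and e: "c{b,x1} = j" "c{p,q} = j" "c{q,r} = j"
    and n: "c{b,p} \<noteq> j" "c{b,q} \<noteq> j" "c{b,r} \<noteq> j" "c{x1,p} \<noteq> j" "c{x1,q} \<noteq> j" "c{x1,r} \<noteq> j"
  shows False
proof -
  have c1: "{q,b} = {b,q}" "{q,x1} = {x1,q}" "{r,b} = {b,r}" "{r,x1} = {x1,r}" "{p,b} = {b,p}"
    by (simp_all add: insert_commute)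
  have e1: "c{q,b} = c{q,x1}" by (rule galR[OF g, of q b x1 j]) (use V ds e n c1 in auto)
  have e2: "c{r,b} = c{r,x1}" by (rule galR[OF g, of r b x1 j]) (use V ds e n c1 in auto)
  have e3: "c{b,p} = c{b,q}" by (rule galR[OF g, of b p q j]) (use V ds e n c1 in auto)
  have e4: "c{b,q} = c{b,r}" by (rule galR[OF g, of b q r j]) (use V ds e n c1 in auto)
  show False
    apply (rule P5E[OF p, of p b q x1 r "c{b,p}"])
    using V ds e1 e2 e3 e4 c1 by auto
qed



lemma hard:
  assumes fin: "finite V" and g: "gal V c" and p: "p5f V c" and c5: "card V \<ge> 5" and bV: "b\<in>V"
    and mx: "\<forall>y\<in>V. card (nb V c j y) \<le> card (nb V c j b)"
    and cn: "comp V c j b = V"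
    and PV: "p\<in>V" "q\<in>V" "r\<in>V" and Pd: "p\<noteq>q" "q\<noteq>r" "p\<noteq>r" "b\<noteq>p" "b\<noteq>q" "b\<noteq>r"
    and Pe: "c{p,q} = j" "c{q,r} = j"
    and d2: "card (nb V c j b) \<ge> 2"
  shows False
proof -
  have finN: "finite (nb V c j y)" for y using fin by (simp add: nb_def)
  have nbI: "z \<in> nb V c j y \<longleftrightarrow> z\<in>V \<and> z\<noteq>y \<and> c{y,z} = j" for z y by (simp add: nb_def)
  have Pe': "c{q,p} = j" "c{r,q} = j" using Pe by (simp_all add: insert_commute)
  have sym: "c{x,y} = c{y,x}" for x y by (simp add: insert_commute)
  consider (A) "c{b,q} = j \<and> c{b,p} = j" | (B) "c{b,q} = j \<and> c{b,r} = j"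
    | (C) "c{b,q} = j \<and> c{b,p} \<noteq> j \<and> c{b,r} \<noteq> j" | (D) "c{b,q} \<noteq> j \<and> c{b,p} = j"
    | (E) "c{b,q} \<noteq> j \<and> c{b,r} = j" | (F) "c{b,q} \<noteq> j \<and> c{b,p} \<noteq> j \<and> c{b,r} \<noteq> j" by blast
  then show False
  proof cases
    case A
    have "{p,r,b} \<subseteq> nb V c j q" using A PV Pd Pe Pe' bV sym[of q b] by (auto simp: nbI)
    then have "card {p,r,b} \<le> card (nb V c j q)" by (rule card_mono[OF finN])
    moreover have "card {p,r,b} = 3" using Pd by auto
    ultimately have d3: "card (nb V c j b) \<ge> 3" using mx PV by force
    show False
    proof (cases "\<exists>x\<in>nb V c j b. x\<notin>{p,q,r}")
      case True
      then obtain x where x: "x \<in> nb V c j b" "x\<notin>{p,q,r}" by blast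
      show False using P5E[OF p, of x b p q r j] x A PV Pd Pe bV sym[of x b] by (auto simp: nbI)
    next
      case False
      then have sub: "nb V c j b \<subseteq> {p,q,r}" by blast
      have "card {p,q,r} = 3" using Pd by auto
      then have "nb V c j b = {p,q,r}" using card_seteq[OF _ sub] d3 by simp
      then have "c{b,r} = j" by (auto simp: nbI)
      then show False using C4[OF p cn c5 fin bV PV] A Pe Pd sym[of r b] by auto
    qed
  next
    case B
    have "{p,r,b} \<subseteq> nb V c j q" using B PV Pd Pe Pe' bV sym[of q b] by (auto simp: nbI)
    then have "card {p,r,b} \<le> card (nb V c j q)" by (rule card_mono[OF finN])
    moreover have "card {p,r,b} = 3" using Pd by auto
    ultimately have d3: "card (nb V c j b) \<ge> 3" using mx PV by force
    show False
    proof (cases "\<exists>x\<in>nb V c j b. x\<notin>{p,q,r}")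
      case True
      then obtain x where x: "x \<in> nb V c j b" "x\<notin>{p,q,r}" by blast
      show False using P5E[OF p, of x b r q p j] x B PV Pd Pe' bV sym[of x b] by (auto simp: nbI)
    next
      case False
      then have sub: "nb V c j b \<subseteq> {p,q,r}" by blast
      have "card {p,q,r} = 3" using Pd by auto
      then have "nb V c j b = {p,q,r}" using card_seteq[OF _ sub] d3 by simp
      then have "c{b,p} = j" by (auto simp: nbI)
      then show False using C4[OF p cn c5 fin bV PV(3) PV(2) PV(1)] B Pe' Pd sym[of p b] by auto
    qed
  next
    case C
    have "{p,r,b} \<subseteq> nb V c j q" using C PV Pd Pe Pe' bV sym[of q b] by (auto simp: nbI)
    then have "card {p,r,b} \<le> card (nb V c j q)" by (rule card_mono[OF finN])
    moreover have "card {p,r,b} = 3" using Pd by auto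
    ultimately have d3: "card (nb V c j b) \<ge> 3" using mx PV by force
    have "q \<in> nb V c j b" using C PV Pd by (auto simp: nbI)
    then have d2': "card (nb V c j b - {q}) \<ge> 2" using d3 finN by (simp add: card_Diff_singleton)
    obtain x1 where x1: "x1 \<in> nb V c j b - {q}" using one_el[of "nb V c j b - {q}"] d2' finN by force
    obtain x2 where x2: "x2 \<in> nb V c j b - {q}" "x2 \<noteq> x1" using two_el[OF _ d2' x1] finN by blast
    show False
      apply (rule config[OF g p bV PV(2), of x1 x2 p r j])
      using x1 x2 C PV Pd Pe Pe' by (auto simp: nbI)
  next
    case D
    show False
    proof (cases "\<exists>x\<in>nb V c j b. x\<notin>{p,r}")
      case True
      then obtain x where x: "x \<in> nb V c j b" "x\<notin>{p,r}" by blast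
      have "x \<noteq> q" using x D by (auto simp: nbI)
      then show False using P5E[OF p, of x b p q r j] x D PV Pd Pe bV sym[of x b] by (auto simp: nbI)
    next
      case False
      then have sub: "nb V c j b \<subseteq> {p,r}" by blast
      have "card {p,r} = 2" using Pd by auto
      then have "nb V c j b = {p,r}" using card_seteq[OF _ sub] d2 by simp
      then have "c{b,r} = j" by (auto simp: nbI)
      then show False using C4[OF p cn c5 fin bV PV] D Pe Pd sym[of r b] by auto
    qed
  next
    case E
    show False
    proof (cases "\<exists>x\<in>nb V c j b. x\<notin>{p,r}")
      case True
      then obtain x where x: "x \<in> nb V c j b" "x\<notin>{p,r}" by blast
      have "x \<noteq> q" using x E by (auto simp: nbI)
      then show False using P5E[OF p, of x b r q p j] x E PV Pd Pe' bV sym[of x b] by (auto simp: nbI)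
    next
      case False
      then have sub: "nb V c j b \<subseteq> {p,r}" by blast
      have "card {p,r} = 2" using Pd by auto
      then have "nb V c j b = {p,r}" using card_seteq[OF _ sub] d2 by simp
      then have "c{b,p} = j" by (auto simp: nbI)
      then show False using C4[OF p cn c5 fin bV PV(3) PV(2) PV(1)] E Pe' Pd sym[of p b] by auto
    qed
  next
    case F
    obtain x1 where x1: "x1 \<in> nb V c j b" using one_el[of "nb V c j b"] d2 finN by force
    have nx: "x \<notin> {p,q,r}" if "x \<in> nb V c j b" for x using that F by (auto simp: nbI)
    show False
    proof (cases "\<exists>x\<in>nb V c j b. \<exists>y\<in>{p,q,r}. c{x,y} = j")
      case True
      then obtain x y where x: "x \<in> nb V c j b" and y: "y\<in>{p,q,r}" and xy: "c{x,y} = j" by blast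
      obtain x' where x': "x' \<in> nb V c j b" "x' \<noteq> x" using two_el[OF finN d2 x] by blast
      have xx: "x \<notin> {p,q,r}" "x' \<notin> {p,q,r}" using nx x x' by auto
      have bx: "c{x',b} = j" "c{b,x} = j" "x \<in> V" "x' \<in> V" "x \<noteq> b" "x' \<noteq> b"
        using x x' sym[of x' b] by (auto simp: nbI)
      from y have "y = p \<or> y = q \<or> y = r" by auto
      then show False
      proof (elim disjE)
        assume "y = p" then show False
          using P5E[OF p, of x' b x p q j] x' xx bx xy PV Pd Pe bV by auto
      next
        assume "y = q" then show False
          using P5E[OF p, of x' b x q p j] x' xx bx xy PV Pd Pe' bV by auto
      next
        assume "y = r" then show False
          using P5E[OF p, of x' b x r q j] x' xx bx xy PV Pd Pe' bV by auto
      qed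
    next
      case False
      have xx: "x1 \<notin> {p,q,r}" "x1 \<in> V" "x1 \<noteq> b" "c{b,x1} = j" using nx x1 by (auto simp: nbI)
      show False
        apply (rule crossX[OF g p bV xx(2) PV, of j])
        using False x1 xx F Pd Pe by auto
    qed
  qed
qed



lemma gal_sub: assumes "gal V c" "W \<subseteq> V" shows "gal W c"
  unfolding gal_def
proof (intro ballI impI)
  fix a b d assume h: "a\<in>W" "b\<in>W" "d\<in>W" "a\<noteq>b" "b\<noteq>d" "a\<noteq>d"
  then have "a\<in>V" "b\<in>V" "d\<in>V" using assms(2) by auto
  then show "c {a,b} = c {b,d} \<or> c {a,b} = c {a,d} \<or> c {b,d} = c {a,d}"
    using assms(1)[unfolded gal_def, rule_format, of a b d] h by blast
qed

lemma p5f_sub: assumes "p5f V c" "W \<subseteq> V" shows "p5f W c"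
  unfolding p5f_def[of W]
proof (rule notI, elim exE conjE)
  fix a b d e f assume h: "a\<in>W" "b\<in>W" "d\<in>W" "e\<in>W" "f\<in>W" "distinct [a,b,d,e,f]"
    "c{a,b} = c{b,d}" "c{b,d} = c{d,e}" "c{d,e} = c{e,f}"
  show False by (rule P5E[OF assms(1), of a b d e f "c{a,b}"]) (use h assms(2) in auto)
qed

lemma p3_mono: assumes "p3 W c j" "W \<subseteq> V" shows "p3 V c j"
proof -
  obtain a b d where h: "a\<in>W" "b\<in>W" "d\<in>W" "a\<noteq>b" "b\<noteq>d" "a\<noteq>d" "c{a,b} = j" "c{b,d} = j"
    using assms(1) unfolding p3_def by blast
  then have "a\<in>V" "b\<in>V" "d\<in>V" using assms(2) by auto
  then show ?thesis unfolding p3_def using h by blast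
qed

lemma Bs_mono: "W \<subseteq> V \<Longrightarrow> Bs W c \<subseteq> Bs V c"
  unfolding Bs_def using p3_mono by blast

lemma Bs_fin: assumes "finite V" shows "finite (Bs V c)"
proof -
  have "Bs V c \<subseteq> (\<lambda>(a,b). c{a,b}) ` (V \<times> V)"
  proof
    fix j assume "j \<in> Bs V c"
    then obtain a b d where h: "a\<in>V" "b\<in>V" "c{a,b} = j"
      unfolding Bs_def p3_def by blast
    show "j \<in> (\<lambda>(a,b). c{a,b}) ` (V \<times> V)"
      by (rule image_eqI[of _ _ "(a,b)"]) (use h in auto)
  qed
  then show ?thesis using assms finite_subset by blast
qed

lemma three_el: assumes "finite A" "card A \<ge> 3" shows "\<exists>a\<in>A. \<exists>b\<in>A. \<exists>d\<in>A. a\<noteq>b \<and> b\<noteq>d \<and> a\<noteq>d"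
proof -
  obtain a where a: "a \<in> A" using one_el[of A] assms by force
  obtain b where b: "b \<in> A" "b \<noteq> a" using two_el[OF assms(1) _ a] assms by force
  have "card (A - {a,b}) = card A - 2" using a b assms by (simp add: card_Diff_subset)
  then have "card (A - {a,b}) \<ge> 1" using assms by simp
  then obtain d where "d \<in> A - {a,b}" using one_el[of "A - {a,b}"] assms by force
  then show ?thesis using a b by blast
qed

lemma bound_main: "finite V \<Longrightarrow> gal V c \<Longrightarrow> p5f V c \<Longrightarrow> card V \<le> card (Bs V c) + 3"
proof (induction "card V" arbitrary: V rule: less_induct)
  case less
  note IH = less.hyps
  note fin = less.prems(1) and g = less.prems(2) and p = less.prems(3)
  show ?case
  proof (cases "card V \<le> 3")
    case True then show ?thesis by simp
  next
    case False
    have sym: "c{x,y} = c{y,x}" for x y by (simp add: insert_commute)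
    obtain a b d where abd: "a\<in>V" "b\<in>V" "d\<in>V" "a\<noteq>b" "b\<noteq>d" "a\<noteq>d"
      using three_el[OF fin] False by force
    have "c {a,b} = c {b,d} \<or> c {a,b} = c {a,d} \<or> c {b,d} = c {a,d}"
      using g abd unfolding gal_def by blast
    then have "\<exists>red. p3 V c red"
    proof (elim disjE)
      assume "c {a,b} = c {b,d}" then show ?thesis using abd unfolding p3_def by blast
    next
      assume h: "c {a,b} = c {a,d}"
      have "p3 V c (c{a,b})" unfolding p3_def
        by (rule exI[of _ d], rule exI[of _ a], rule exI[of _ b]) (use abd h sym[of d a] in auto)
      then show ?thesis by blast
    next
      assume h: "c {b,d} = c {a,d}"
      have "p3 V c (c{b,d})" unfolding p3_def
        by (rule exI[of _ a], rule exI[of _ d], rule exI[of _ b]) (use abd h sym[of d b] sym[of a d] in auto)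
      then show ?thesis by blast
    qed
    then obtain red where red: "p3 V c red" by blast
    have finB: "finite (Bs V c)" using Bs_fin[OF fin] .
    have redB: "red \<in> Bs V c" using red by (simp add: Bs_def)
    have B1: "card (Bs V c) \<ge> 1" using finB redB by (metis One_nat_def Suc_leI card_gt_0_iff empty_iff)
    show ?thesis
    proof (cases "card V = 4")
      case True then show ?thesis using B1 by simp
    next
      case False
      then have c5: "card V \<ge> 5" using \<open>\<not> card V \<le> 3\<close> by simp
      have finN: "finite (nb V c red y)" for y using fin by (simp add: nb_def)
      have nbI: "z \<in> nb V c red y \<longleftrightarrow> z\<in>V \<and> z\<noteq>y \<and> c{y,z} = red" for z y by (simp add: nb_def)
      define dg where "dg y = card (nb V c red y)" for y
      have Vne: "V \<noteq> {}" using c5 by auto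
      have "Max (dg ` V) \<in> dg ` V" using Max_in[of "dg ` V"] fin Vne by auto
      then obtain b where bV: "b \<in> V" and bmax: "dg b = Max (dg ` V)"
        by (metis imageE)
      have mx: "\<forall>y\<in>V. card (nb V c red y) \<le> card (nb V c red b)"
        using bmax fin dg_def by auto
      from red obtain a0 m0 e0 where P0: "a0\<in>V" "m0\<in>V" "e0\<in>V" "a0\<noteq>m0" "m0\<noteq>e0" "a0\<noteq>e0"
        "c{a0,m0} = red" "c{m0,e0} = red" unfolding p3_def by blast
      have "{a0,e0} \<subseteq> nb V c red m0" using P0 sym[of a0 m0] by (auto simp: nbI)
      then have "card {a0,e0} \<le> card (nb V c red m0)" by (rule card_mono[OF finN])
      then have "card (nb V c red m0) \<ge> 2" using P0 by simp
      then have d2: "card (nb V c red b) \<ge> 2" using mx P0 by force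
      obtain n1 where n1: "n1 \<in> nb V c red b" using one_el[of "nb V c red b"] d2 finN by force
      obtain n2 where n2: "n2 \<in> nb V c red b" "n2 \<noteq> n1" using two_el[OF finN d2 n1] by blast
      define C where "C = comp V c red b"
      have CV: "C \<subseteq> V" using comp_sub[OF bV] C_def by simp
      have bC: "b \<in> C" using comp_self C_def by simp
      have "adj V c red b n1" using n1 bV by (auto simp: nbI adj_def)
      then have n1C: "n1 \<in> C" using comp_step[OF comp_self] C_def by blast
      have "adj V c red b n2" using n2 bV by (auto simp: nbI adj_def)
      then have n2C: "n2 \<in> C" using comp_step[OF comp_self] C_def by blast
      have nn: "n1 \<noteq> b" "n2 \<noteq> b" "c{b,n1} = red" "c{b,n2} = red" "n1 \<in> V" "n2 \<in> V"
        using n1 n2 by (auto simp: nbI)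
      show ?thesis
      proof (cases "C = V")
        case False
        define Ov where "Ov = V - C"
        have finC: "finite C" using CV fin finite_subset by blast
        have ltC: "card C < card V" using CV False fin by (meson psubsetI psubset_card_mono)
        have IHC: "card C \<le> card (Bs C c) + 3"
          using IH[OF ltC finC gal_sub[OF g CV] p5f_sub[OF p CV]] .
        define f where "f x = c{x,b}" for x
        have md: "c{x,z} = f x \<and> c{x,z} \<noteq> red" if "x \<in> Ov" "z \<in> C" for x z
          using comp_module[OF g bV, of x red z] that Ov_def C_def f_def by auto
        have fB: "f x \<in> Bs V c" if x: "x \<in> Ov" for x
        proof -
          have "x \<noteq> n1" "x \<noteq> n2" "x \<in> V" using x n1C n2C Ov_def by auto
          then have "p3 V c (f x)" unfolding p3_def
            by (rule_tac x=n1 in exI, rule_tac x=x in exI, rule_tac x=n2 in exI)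
               (use md[OF x n1C] md[OF x n2C] nn n2(2) sym[of n1 x] in auto)
          then show ?thesis by (simp add: Bs_def)
        qed
        have fnB: "f x \<notin> Bs C c" if x: "x \<in> Ov" for x
        proof
          assume "f x \<in> Bs C c"
          then obtain a m e where P: "a\<in>C" "m\<in>C" "e\<in>C" "a\<noteq>m" "m\<noteq>e" "a\<noteq>e"
            "c{a,m} = f x" "c{m,e} = f x" unfolding Bs_def p3_def by blast
          have xV: "x \<in> V" "x \<notin> C" using x Ov_def by auto
          show False
          proof (cases "\<exists>w\<in>C. w \<notin> {a,m,e}")
            case True
            then obtain w where w: "w \<in> C" "w \<notin> {a,m,e}" by blast
            show False
              by (rule P5E[OF p, of w x a m e "f x"])
                 (use w P xV CV md[OF x w(1)] md[OF x P(1)] sym[of w x] in auto)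
          next
            case False
            then have "C \<subseteq> {a,m,e}" by blast
            then have "b \<in> {a,m,e}" "n1 \<in> {a,m,e}" "n2 \<in> {a,m,e}" using bC n1C n2C by auto
            moreover have "f x \<noteq> red" using md[OF x bC] by simp
            moreover have "c{n1,b} = red" "c{n2,b} = red" using nn sym by auto
            ultimately show False using P nn n2(2) by auto
          qed
        qed
        have inj: "inj_on f Ov"
        proof (rule inj_onI)
          fix x y assume x: "x \<in> Ov" and y: "y \<in> Ov" and fxy: "f x = f y"
          show "x = y"
          proof (rule ccontr)
            assume "x \<noteq> y"
            show False
              by (rule P5E[OF p, of n1 x b y n2 "f x"])
                 (use \<open>x \<noteq> y\<close> x y Ov_def nn n2(2) n1C n2C bC bV
                md[OF x n1C] md[OF x bC] md[OF y bC] md[OF y n2C] sym[of n1 x] sym[of b y] fxy in auto)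
          qed
        qed
        have finO: "finite Ov" using fin Ov_def by simp
        have sub: "Bs C c \<union> f ` Ov \<subseteq> Bs V c" using Bs_mono[OF CV] fB by blast
        have disj: "Bs C c \<inter> f ` Ov = {}" using fnB by blast
        have "card (Bs C c \<union> f ` Ov) = card (Bs C c) + card Ov"
          using card_Un_disjoint[OF Bs_fin[OF finC] _ disj] finO card_image[OF inj] by simp
        moreover have "card (Bs C c \<union> f ` Ov) \<le> card (Bs V c)" using card_mono[OF finB sub] .
        moreover have "card V = card C + card Ov"
          using Ov_def CV fin card_Diff_subset[OF finC CV] card_mono[OF fin CV] by simp
        ultimately show ?thesis using IHC by simp
      next
        case True
        then have cn: "comp V c red b = V" using C_def by simp
        show ?thesis
        proof (cases "p3 (V - {b}) c red")
          case False
          have lt: "card (V - {b}) < card V" by (rule card_Diff1_less[OF fin bV])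
          have IHb: "card (V - {b}) \<le> card (Bs (V - {b}) c) + 3"
            using IH[OF lt _ gal_sub[OF g] p5f_sub[OF p]] fin by auto
          have "Bs (V - {b}) c \<subseteq> Bs V c - {red}" using Bs_mono[of "V - {b}" V c] False
            by (auto simp: Bs_def)
          then have "card (Bs (V - {b}) c) \<le> card (Bs V c - {red})" using finB by (simp add: card_mono)
          also have "\<dots> = card (Bs V c) - 1" using redB finB by simp
          finally show ?thesis using IHb bV fin B1 by simp
        next
          case True
          then obtain p0 q0 r0 where P: "p0\<in>V" "q0\<in>V" "r0\<in>V" "p0 \<noteq> b" "q0 \<noteq> b" "r0 \<noteq> b"
            "p0\<noteq>q0" "q0\<noteq>r0" "p0\<noteq>r0" "c{p0,q0} = red" "c{q0,r0} = red"
            unfolding p3_def by blast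
          show ?thesis
            using hard[OF fin g p c5 bV mx cn P(1-3)] P d2 by auto
        qed
      qed
    qed
  qed
qed



lemma mp5: "distinct [a,b,d,e,f] \<Longrightarrow> a<n \<Longrightarrow> b<n \<Longrightarrow> d<n \<Longrightarrow> e<n \<Longrightarrow> f<n \<Longrightarrow>
  c{a,b} = j \<Longrightarrow> c{b,d} = j \<Longrightarrow> c{d,e} = j \<Longrightarrow> c{e,f} = j \<Longrightarrow> has_mono_path n c 5 j"
  unfolding has_mono_path_def
  apply (rule exI[of _ "[a,b,d,e,f]"])
  apply (auto simp: less_Suc_eq numeral_eq_Suc)
  done

lemma mp3: "distinct [a,b,d] \<Longrightarrow> a<n \<Longrightarrow> b<n \<Longrightarrow> d<n \<Longrightarrow>
  c{a,b} = j \<Longrightarrow> c{b,d} = j \<Longrightarrow> has_mono_path n c 3 j"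
  unfolding has_mono_path_def
  apply (rule exI[of _ "[a,b,d]"])
  apply (auto simp: less_Suc_eq numeral_eq_Suc)
  done

theorem lemma1:
  fixes k t n :: nat and c :: "nat set \<Rightarrow> nat"
  assumes "k \<ge> 2" and "t \<le> k" and "n \<ge> t + 4"
    and "edge_coloring n k c"
  shows "has_rainbow_triangle n c \<or>
         (\<exists>j\<in>{1..t}. has_mono_path n c 5 j) \<or>
         (\<exists>j\<in>{t+1..k}. has_mono_path n c 3 j)"
proof (rule ccontr)
  assume H: "\<not> ?thesis"
  then have nr: "\<not> has_rainbow_triangle n c"
    and n5: "\<And>j. j\<in>{1..t} \<Longrightarrow> \<not> has_mono_path n c 5 j"
    and n3: "\<And>j. j\<in>{t+1..k} \<Longrightarrow> \<not> has_mono_path n c 3 j" by auto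
  have ec: "c{u,v} \<in> {1..k}" if "u<n" "v<n" "u\<noteq>v" for u v
    using assms(4) that unfolding edge_coloring_def by blast
  have g: "gal {..<n} c"
    unfolding gal_def
  proof (intro ballI impI)
    fix a b d assume h: "a\<in>{..<n}" "b\<in>{..<n}" "d\<in>{..<n}" "a\<noteq>b" "b\<noteq>d" "a\<noteq>d"
    show "c {a,b} = c {b,d} \<or> c {a,b} = c {a,d} \<or> c {b,d} = c {a,d}"
      using nr h unfolding has_rainbow_triangle_def by auto
  qed
  have p: "p5f {..<n} c"
    unfolding p5f_def
  proof (rule notI, elim exE conjE)
    fix a b d e f assume h: "a\<in>{..<n}" "b\<in>{..<n}" "d\<in>{..<n}" "e\<in>{..<n}" "f\<in>{..<n}"
      "distinct [a,b,d,e,f]" "c{a,b} = c{b,d}" "c{b,d} = c{d,e}" "c{d,e} = c{e,f}"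
    have j: "c{a,b} \<in> {1..k}" using ec h by auto
    show False
    proof (cases "c{a,b} \<le> t")
      case True
      have "has_mono_path n c 5 (c{a,b})"
        by (rule mp5[of a b d e f]) (use h in auto)
      then show False using n5[of "c{a,b}"] True j by auto
    next
      case False
      have "has_mono_path n c 3 (c{a,b})"
        by (rule mp3[of a b d]) (use h in auto)
      then show False using n3[of "c{a,b}"] False j by auto
    qed
  qed
  have sub: "Bs {..<n} c \<subseteq> {1..t}"
  proof
    fix j assume "j \<in> Bs {..<n} c"
    then obtain a b d where h: "a<n" "b<n" "d<n" "a\<noteq>b" "b\<noteq>d" "a\<noteq>d" "c{a,b} = j" "c{b,d} = j"
      unfolding Bs_def p3_def by auto
    have j: "j \<in> {1..k}" using ec h by auto
    show "j \<in> {1..t}"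
    proof (rule ccontr)
      assume "j \<notin> {1..t}"
      moreover have "has_mono_path n c 3 j"
        by (rule mp3[of a b d]) (use h in auto)
      ultimately show False using n3[of j] j by auto
    qed
  qed
  have "card (Bs {..<n} c) \<le> t" using card_mono[OF _ sub] by simp
  moreover have "card {..<n} \<le> card (Bs {..<n} c) + 3" using bound_main[OF _ g p] by simp
  ultimately show False using assms(3) by simp
qed

end
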